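(* There is a $\mathbb{Q}$-valued function $\eta$ on the set of isomorphism classes of finite oriented trees such that: (i) if $T$ is a tree with one vertex and no edges, then $\eta(T)=1$; (ii) if an oriented tree $T'$ (resp. $U$) is obtained from an oriented tree $T$ by reversing the orientation of an edge $e$ (resp. by contracting $e$ to a point), then $\eta(T)+\eta(T')+\eta(U)=0$; (iii) if an oriented tree $T'$ (resp. $T''$) is obtained from an oriented tree $T$ by replacing two distinct edges $ab,ac$ with common origin $a$ by $ab,bc$ (resp. by $ac,cb$), and $U$ is obtained from $T$ by identifying $b$ with $c$ and $ab$ with $ac$, then $\eta(T)=\eta(T')+\eta(T'')+\eta(U)$.
   Context: An oriented tree is a finite tree each of whose edges is given an orientation; an edge $ab$ means an edge oriented from vertex $a$ to vertex $b$. Isomorphism of oriented trees preserves edge orientations. *)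

theory Defs
  imports Complex_Main
begin

text \<open>An oriented tree on vertex set V with directed edge set E: a pair (a,b) in E is an
edge oriented from a to b. The underlying undirected graph is a finite simple tree.\<close>

type_synonym otree = "nat set \<times> (nat \<times> nat) set"

definition oriented_tree :: "otree \<Rightarrow> bool" where
  "oriented_tree T \<longleftrightarrow>
     (let V = fst T; E = snd T in
       finite V \<and> V \<noteq> {} \<and> E \<subseteq> V \<times> V \<and>
       (\<forall>x. (x, x) \<notin> E) \<and>
       (\<forall>x y. (x, y) \<in> E \<longrightarrow> (y, x) \<notin> E) \<and>
       (\<forall>x\<in>V. \<forall>y\<in>V. (x, y) \<in> (E \<union> E\<inverse>)\<^sup>*) \<and>
       card E = card V - 1)"

definition otree_iso :: "otree \<Rightarrow> otree \<Rightarrow> bool" where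
  "otree_iso T S \<longleftrightarrow>
     (\<exists>f. bij_betw f (fst T) (fst S) \<and>
          (\<forall>x\<in>fst T. \<forall>y\<in>fst T. (x, y) \<in> snd T \<longleftrightarrow> (f x, f y) \<in> snd S))"

definition reverse_edge :: "otree \<Rightarrow> nat \<Rightarrow> nat \<Rightarrow> otree" where
  "reverse_edge T a b = (fst T, (snd T - {(a, b)}) \<union> {(b, a)})"

definition merge_vertices :: "otree \<Rightarrow> nat \<Rightarrow> nat \<Rightarrow> otree" where
  "merge_vertices T b c =
     (let g = (\<lambda>x. if x = c then b else x) in
       (g ` fst T, {(g x, g y) | x y. (x, y) \<in> snd T \<and> g x \<noteq> g y}))"

definition contract_edge :: "otree \<Rightarrow> nat \<Rightarrow> nat \<Rightarrow> otree" where
  "contract_edge T a b = merge_vertices T a b"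

definition replace_edge :: "otree \<Rightarrow> nat \<times> nat \<Rightarrow> nat \<times> nat \<Rightarrow> otree" where
  "replace_edge T e e' = (fst T, (snd T - {e}) \<union> {e'})"

end

theory Submission
  imports Defs "HOL-Computational_Algebra.Polynomial"
begin


lemma conn_card:
  fixes V :: "'a set" and E :: "('a \<times> 'a) set"
  assumes fin: "finite V" and sub: "E \<subseteq> V \<times> V" and r: "r \<in> V"
    and conn: "\<forall>x\<in>V. (x, r) \<in> (E \<union> E\<inverse>)\<^sup>*"
  shows "card V \<le> card E + 1"
proof -
  define S where "S = E \<union> E\<inverse>"
  define d where "d = (\<lambda>v. LEAST n. (v, r) \<in> S ^^ n)"
  have dex: "(v, r) \<in> S ^^ d v" if "v \<in> V" for v
  proof -
    from conn that have "(v, r) \<in> S\<^sup>*" by (simp add: S_def)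
    then obtain n where "(v, r) \<in> S ^^ n" using rtrancl_power by blast
    then show ?thesis unfolding d_def by (rule LeastI)
  qed
  have step: "\<exists>p. p \<in> E \<and> (\<exists>u. (p = (v, u) \<or> p = (u, v)) \<and> d u < d v)"
    if "v \<in> V" "v \<noteq> r" for v
  proof -
    have "d v \<noteq> 0" using dex[OF that(1)] that(2) by (metis pair_in_Id_conv relpow.simps(1))
    then obtain n where n: "d v = Suc n" by (cases "d v") auto
    with dex[OF that(1)] obtain u where "(v, u) \<in> S" "(u, r) \<in> S ^^ n"
      by (metis relpow_Suc_D2)
    moreover from this(2) have "d u \<le> n" unfolding d_def by (rule Least_le)
    ultimately have duv: "d u < d v" and "(v, u) \<in> E \<or> (u, v) \<in> E" using n unfolding S_def by auto
    from this(2) show ?thesis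
    proof
      assume "(v, u) \<in> E"
      then have "(v, u) \<in> E \<and> (\<exists>w. ((v, u) = (v, w) \<or> (v, u) = (w, v)) \<and> d w < d v)" using duv by auto
      then show ?thesis by (rule exI)
    next
      assume "(u, v) \<in> E"
      then have "(u, v) \<in> E \<and> (\<exists>w. ((u, v) = (v, w) \<or> (u, v) = (w, v)) \<and> d w < d v)" using duv by auto
      then show ?thesis by (rule exI)
    qed
  qed
  define psi where "psi = (\<lambda>v. SOME p. p \<in> E \<and> (\<exists>u. (p = (v, u) \<or> p = (u, v)) \<and> d u < d v))"
  have psi: "psi v \<in> E \<and> (\<exists>u. (psi v = (v, u) \<or> psi v = (u, v)) \<and> d u < d v)"
    if "v \<in> V - {r}" for v
    
  proof -
    have "\<exists>p. p \<in> E \<and> (\<exists>u. (p = (v, u) \<or> p = (u, v)) \<and> d u < d v)" using step[of v] that by blast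
    then show ?thesis unfolding psi_def by (rule someI_ex)
  qed
  have inj: "inj_on psi (V - {r})"
  proof (rule inj_onI)
    fix v w assume v: "v \<in> V - {r}" and w: "w \<in> V - {r}" and eq: "psi v = psi w"
    show "v = w"
    proof (rule ccontr)
      assume ne: "v \<noteq> w"
      from psi[OF v] obtain u where u: "psi v = (v, u) \<or> psi v = (u, v)" "d u < d v" by blast
      from psi[OF w] obtain u' where u': "psi w = (w, u') \<or> psi w = (u', w)" "d u' < d w" by blast
      have "u = w \<and> u' = v" using u(1) u'(1) eq ne by (cases "psi v") auto
      with u(2) u'(2) show False by simp
    qed
  qed
  have im: "psi ` (V - {r}) \<subseteq> E"
  proof
    fix p assume "p \<in> psi ` (V - {r})"
    then obtain v where "v \<in> V - {r}" "p = psi v" by blast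
    then show "p \<in> E" using psi[of v] by simp
  qed
  have finE: "finite E" using fin sub finite_subset by blast
  have "card (V - {r}) = card (psi ` (V - {r}))" by (rule card_image[symmetric, OF inj])
  also have "\<dots> \<le> card E" by (rule card_mono[OF finE im])
  finally have "card (V - {r}) \<le> card E" .
  then show ?thesis using r fin by simp
qed

lemma tree_cut:
  assumes T: "oriented_tree (V, E)" and e: "(x, y) \<in> E"
  shows "(x, y) \<notin> ((E - {(x, y)}) \<union> (E - {(x, y)})\<inverse>)\<^sup>*"
proof
  assume xy: "(x, y) \<in> ((E - {(x, y)}) \<union> (E - {(x, y)})\<inverse>)\<^sup>*"
  let ?F = "E - {(x, y)}"
  let ?SF = "(?F \<union> ?F\<inverse>)\<^sup>*"
  from T have fin: "finite V" and ne: "V \<noteq> {}" and sub: "E \<subseteq> V \<times> V"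
    and conn: "\<forall>a\<in>V. \<forall>b\<in>V. (a, b) \<in> (E \<union> E\<inverse>)\<^sup>*" and cd: "card E = card V - 1"
    unfolding oriented_tree_def Let_def by auto
  have "E \<union> E\<inverse> \<subseteq> ?SF"
  proof
    fix p assume p: "p \<in> E \<union> E\<inverse>"
    show "p \<in> ?SF"
    proof (cases "p = (x, y) \<or> p = (y, x)")
      case True
      moreover have "(y, x) \<in> ?SF" using xy by (metis converse_Un converse_converse rtrancl_converseI sup_commute)
      ultimately show ?thesis using xy by auto
    next
      case False
      with p show ?thesis by auto
    qed
  qed
  then have "(E \<union> E\<inverse>)\<^sup>* \<subseteq> ?SF" by (metis rtrancl_subset_rtrancl rtrancl_idemp)
  then have conn2: "\<forall>a\<in>V. (a, x) \<in> ?SF" using conn e sub by blast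
  have "card V \<le> card ?F + 1"
    using conn_card[OF fin _ _ conn2] sub e by auto
  moreover have "finite E" using fin sub finite_subset by blast
  then have "card ?F = card E - 1" using e by simp
  moreover have "card V \<ge> 2"
  proof -
    have "x \<noteq> y" using T e unfolding oriented_tree_def Let_def by auto
    moreover have "x \<in> V" "y \<in> V" using e sub by auto
    ultimately have "{x, y} \<subseteq> V" by auto
    then have "card {x,y} \<le> card V" using fin card_mono by blast
    with \<open>x \<noteq> y\<close> show ?thesis by simp
  qed
  ultimately show False using cd by simp
qed



definition valid :: "nat set \<Rightarrow> (nat \<times> nat) set \<Rightarrow> nat \<Rightarrow> (nat \<Rightarrow> nat) \<Rightarrow> bool" where
  "valid V R N f \<longleftrightarrow> (\<forall>x\<in>V. f x < N) \<and> (\<forall>x. x \<notin> V \<longrightarrow> f x = 0) \<and> (\<forall>(x, y)\<in>R. f x < f y)"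

definition cnt :: "nat set \<Rightarrow> (nat \<times> nat) set \<Rightarrow> nat \<Rightarrow> nat" where
  "cnt V R N = card {f. valid V R N f}"

lemma finite_valid: "finite V \<Longrightarrow> finite {f. valid V R N f}"
proof -
  assume "finite V"
  then have "finite {f. \<forall>x. (x \<in> V \<longrightarrow> f x \<in> {..<N}) \<and> (x \<notin> V \<longrightarrow> f x = 0)}"
    by (intro finite_set_of_finite_funs) auto
  then show ?thesis by (rule finite_subset[rotated]) (auto simp: valid_def)
qed

definition rank :: "nat set \<Rightarrow> nat \<Rightarrow> nat" where
  "rank S x = card {y\<in>S. y < x}"

lemma rank_mono:
  assumes "finite S" "x \<in> S" "y \<in> S" "x < y" shows "rank S x < rank S y"
proof -
  have "{z\<in>S. z < x} \<subset> {z\<in>S. z < y}" using assms by auto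
  then show ?thesis unfolding rank_def using assms(1) by (intro psubset_card_mono) auto
qed

lemma rank_less_iff:
  assumes "finite S" "x \<in> S" "y \<in> S" shows "rank S x < rank S y \<longleftrightarrow> x < y"
  using rank_mono[OF assms(1)] assms by (metis less_asym linorder_neqE_nat)

lemma rank_bij: assumes "finite S" shows "bij_betw (rank S) S {..<card S}"
proof -
  have inj: "inj_on (rank S) S"
    by (rule inj_onI) (metis assms rank_mono less_irrefl linorder_neqE_nat)
  have sub: "rank S ` S \<subseteq> {..<card S}"
  proof
    fix r assume "r \<in> rank S ` S"
    then obtain x where x: "x \<in> S" "r = rank S x" by auto
    have "{y\<in>S. y < x} \<subset> S" using x by auto
    then show "r \<in> {..<card S}" using x assms unfolding rank_def by (simp add: psubset_card_mono)
  qed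
  have "card (rank S ` S) = card {..<card S}" using card_image[OF inj] by simp
  then have "rank S ` S = {..<card S}" using sub by (intro card_subset_eq) auto
  with inj show ?thesis by (simp add: bij_betw_def)
qed

definition surjs :: "nat set \<Rightarrow> (nat \<times> nat) set \<Rightarrow> nat \<Rightarrow> nat" where
  "surjs V R k = card {h. valid V R k h \<and> h ` V = {..<k}}"

lemma card_fixed_image:
  assumes fin: "finite V" and RV: "R \<subseteq> V \<times> V" and S: "finite S"
  shows "card {f. valid V R N f \<and> f ` V = S} = (if S \<subseteq> {..<N} then surjs V R (card S) else 0)"
proof (cases "S \<subseteq> {..<N}")
  case False
  then have "{f. valid V R N f \<and> f ` V = S} = {}" unfolding valid_def by auto
  then show ?thesis using False by (metis card.empty)
next
  case True
  let ?k = "card S"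
  let ?r = "rank S"
  let ?e = "inv_into S ?r"
  have bij: "bij_betw ?r S {..<?k}" by (rule rank_bij[OF S])
  have bij2: "bij_betw ?e {..<?k} S" by (rule bij_betw_inv_into[OF bij])
  have er: "?e (?r x) = x" if "x \<in> S" for x using bij that by (simp add: bij_betw_inv_into_left)
  have re: "?r (?e i) = i" if "i < ?k" for i using bij that by (simp add: bij_betw_inv_into_right)
  have eS: "?e i \<in> S" if "i < ?k" for i using bij2 that by (auto simp: bij_betw_def)
  define phi where "phi = (\<lambda>f x. if x \<in> V then ?r (f x) else 0)"
  define psi where "psi = (\<lambda>h x. if x \<in> V then ?e (h x) else 0)"
  have "bij_betw phi {f. valid V R N f \<and> f ` V = S} {h. valid V R ?k h \<and> h ` V = {..<?k}}"
  proof (rule bij_betw_byWitness[where f' = psi])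
    show "\<forall>f\<in>{f. valid V R N f \<and> f ` V = S}. psi (phi f) = f"
    proof
      fix f assume f: "f \<in> {f. valid V R N f \<and> f ` V = S}"
      show "psi (phi f) = f"
      proof
        fix x show "psi (phi f) x = f x"
          using f er unfolding psi_def phi_def valid_def by auto
      qed
    qed
    show "\<forall>h\<in>{h. valid V R ?k h \<and> h ` V = {..<?k}}. phi (psi h) = h"
    proof
      fix h assume h: "h \<in> {h. valid V R ?k h \<and> h ` V = {..<?k}}"
      show "phi (psi h) = h"
      proof
        fix x show "phi (psi h) x = h x"
          using h re unfolding psi_def phi_def valid_def by auto
      qed
    qed
    show "phi ` {f. valid V R N f \<and> f ` V = S} \<subseteq> {h. valid V R ?k h \<and> h ` V = {..<?k}}"
    proof (rule subsetI)
      fix g assume "g \<in> phi ` {f. valid V R N f \<and> f ` V = S}"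
      then obtain f where v: "valid V R N f" and im: "f ` V = S" and g: "g = phi f" by blast
      have fS: "x \<in> V \<Longrightarrow> f x \<in> S" for x using im by auto
      have "valid V R ?k (phi f) \<and> phi f ` V = {..<?k}"
      proof
      show "valid V R ?k (phi f)"
        unfolding valid_def
      proof (intro conjI)
        show "\<forall>x\<in>V. phi f x < ?k" using fS bij unfolding phi_def by (auto simp: bij_betw_def)
        show "\<forall>x. x \<notin> V \<longrightarrow> phi f x = 0" unfolding phi_def by auto
        show "\<forall>(x, y)\<in>R. phi f x < phi f y"
        proof safe
          fix x y assume xy: "(x, y) \<in> R"
          then have "x \<in> V" "y \<in> V" using RV by auto
          moreover have "f x < f y" using v xy unfolding valid_def by auto
          ultimately show "phi f x < phi f y" unfolding phi_def using fS rank_less_iff[OF S] by auto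
        qed
      qed
      have "phi f ` V = ?r ` (f ` V)" unfolding phi_def by auto
      also have "\<dots> = {..<?k}" using bij im by (simp add: bij_betw_def)
      finally show "phi f ` V = {..<?k}" .
      qed
      then show "g \<in> {h. valid V R ?k h \<and> h ` V = {..<?k}}" using g by simp
    qed
    show "psi ` {h. valid V R ?k h \<and> h ` V = {..<?k}} \<subseteq> {f. valid V R N f \<and> f ` V = S}"
    proof (rule subsetI)
      fix g assume "g \<in> psi ` {h. valid V R ?k h \<and> h ` V = {..<?k}}"
      then obtain h where v: "valid V R ?k h" and im: "h ` V = {..<?k}" and g: "g = psi h" by blast
      have hk: "x \<in> V \<Longrightarrow> h x < ?k" for x using im by auto
      have "valid V R N (psi h) \<and> psi h ` V = S"
      proof
      show "valid V R N (psi h)"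
        unfolding valid_def
      proof (intro conjI)
        show "\<forall>x\<in>V. psi h x < N" using hk eS True unfolding psi_def by auto
        show "\<forall>x. x \<notin> V \<longrightarrow> psi h x = 0" unfolding psi_def by auto
        show "\<forall>(x, y)\<in>R. psi h x < psi h y"
        proof safe
          fix x y assume xy: "(x, y) \<in> R"
          then have xV: "x \<in> V" "y \<in> V" using RV by auto
          moreover have "h x < h y" using v xy unfolding valid_def by auto
          ultimately show "psi h x < psi h y" unfolding psi_def
            using hk eS re rank_less_iff[OF S, of "?e (h x)" "?e (h y)"] by auto
        qed
      qed
      have "psi h ` V = ?e ` (h ` V)" unfolding psi_def by auto
      also have "\<dots> = S" using bij2 im by (simp add: bij_betw_def)
      finally show "psi h ` V = S" .
      qed
      then show "g \<in> {f. valid V R N f \<and> f ` V = S}" using g by simp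
    qed
  qed
  then have "card {f. valid V R N f \<and> f ` V = S} = card {h. valid V R ?k h \<and> h ` V = {..<?k}}"
    by (rule bij_betw_same_card)
  then show ?thesis using True unfolding surjs_def by simp
qed

lemma surjs_zero: assumes "finite V" "card V < k" shows "surjs V R k = 0"
proof -
  have "{h. valid V R k h \<and> h ` V = {..<k}} = {}"
  proof (rule ccontr)
    assume "{h. valid V R k h \<and> h ` V = {..<k}} \<noteq> {}"
    then obtain h where "h ` V = {..<k}" by auto
    then have "card {..<k} \<le> card V" by (metis assms(1) card_image_le)
    with assms show False by simp
  qed
  then show ?thesis unfolding surjs_def by (metis card.empty)
qed

lemma cnt_decomp:
  assumes fin: "finite V" and RV: "R \<subseteq> V \<times> V"
  shows "cnt V R N = (\<Sum>k\<le>card V. surjs V R k * (N choose k))"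
proof -
  let ?X = "{f. valid V R N f}"
  have imgsub: "(\<lambda>f. f ` V) ` ?X \<subseteq> Pow {..<N}" unfolding valid_def by auto
  have "cnt V R N = (\<Sum>f\<in>?X. 1)" unfolding cnt_def by simp
  also have "\<dots> = (\<Sum>S\<in>Pow {..<N}. \<Sum>f\<in>{f \<in> ?X. f ` V = S}. 1)"
    by (rule sum.group[symmetric, OF finite_valid[OF fin] _ imgsub]) simp
  also have "\<dots> = (\<Sum>S\<in>Pow {..<N}. surjs V R (card S))"
  proof (rule sum.cong)
    fix S assume S: "S \<in> Pow {..<N}"
    then have fS: "finite S" by (meson PowD finite_lessThan finite_subset)
    have "(\<Sum>f\<in>{f \<in> ?X. f ` V = S}. 1) = card {f. valid V R N f \<and> f ` V = S}" by simp
    also have "\<dots> = surjs V R (card S)" using card_fixed_image[OF fin RV fS, of N] S by simp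
    finally show "(\<Sum>f\<in>{f \<in> ?X. f ` V = S}. 1) = surjs V R (card S)" .
  qed simp
  also have "\<dots> = (\<Sum>k\<le>N. \<Sum>S\<in>{S \<in> Pow {..<N}. card S = k}. surjs V R (card S))"
    by (rule sum.group[symmetric]) (auto simp: card_mono[of "{..<N}", simplified])
  also have "\<dots> = (\<Sum>k\<le>N. surjs V R k * (N choose k))"
  proof (rule sum.cong)
    fix k assume "k \<in> {..N}"
    have "(\<Sum>S\<in>{S \<in> Pow {..<N}. card S = k}. surjs V R (card S)) = (\<Sum>S\<in>{S. S \<subseteq> {..<N} \<and> card S = k}. surjs V R k)"
      by (intro sum.cong) auto
    also have "\<dots> = surjs V R k * (N choose k)" using n_subsets[of "{..<N}" k] by simp
    finally show "(\<Sum>S\<in>{S \<in> Pow {..<N}. card S = k}. surjs V R (card S)) = surjs V R k * (N choose k)" .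
  qed simp
  also have "\<dots> = (\<Sum>k\<le>max N (card V). surjs V R k * (N choose k))"
    by (rule sum.mono_neutral_left) auto
  also have "\<dots> = (\<Sum>k\<le>card V. surjs V R k * (N choose k))"
    by (rule sum.mono_neutral_right) (auto simp: surjs_zero[OF fin])
  finally show ?thesis .
qed



definition bpoly :: "nat \<Rightarrow> rat poly" where
  "bpoly k = smult (1 / fact k) (\<Prod>i\<in>{0..<k}. [:- of_nat i, 1:])"

lemma poly_bpoly: "poly (bpoly k) (of_nat N) = of_nat (N choose k)"
proof -
  have "poly (bpoly k) (of_nat N) = (\<Prod>i\<in>{0..<k}. of_nat N - of_nat i) / fact k"
    unfolding bpoly_def by (simp add: poly_prod)
  also have "\<dots> = (of_nat N gchoose k :: rat)" by (simp add: gbinomial_prod_rev)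
  also have "\<dots> = of_nat (N choose k)" by (simp add: binomial_gbinomial)
  finally show ?thesis .
qed

definition Qp :: "nat set \<Rightarrow> (nat \<times> nat) set \<Rightarrow> rat poly" where
  "Qp V R = (\<Sum>k\<le>card V. smult (of_nat (surjs V R k)) (bpoly k))"

lemma poly_Qp:
  assumes "finite V" "R \<subseteq> V \<times> V"
  shows "poly (Qp V R) (of_nat N) = of_nat (cnt V R N)"
  unfolding Qp_def cnt_decomp[OF assms] by (simp add: poly_sum poly_bpoly)

lemma poly_eq_nat:
  fixes p q :: "rat poly"
  assumes "\<And>N. poly p (of_nat N) = poly q (of_nat N)"
  shows "p = q"
proof (rule ccontr)
  assume "p \<noteq> q"
  then have "p - q \<noteq> 0" by simp
  then have fin: "finite {x. poly (p - q) x = 0}" by (rule poly_roots_finite)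
  have "range (of_nat :: nat \<Rightarrow> rat) \<subseteq> {x. poly (p - q) x = 0}" using assms by auto
  then have "finite (range (of_nat :: nat \<Rightarrow> rat))" using fin finite_subset by blast
  moreover have "inj (of_nat :: nat \<Rightarrow> rat)" by (simp add: inj_on_def)
  ultimately show False using finite_imageD by fastforce
qed

definition eta :: "otree \<Rightarrow> rat" where
  "eta T = poly (pderiv (Qp (fst T) (snd T))) 0"



lemma cnt_merge:
  assumes fin: "finite V" and RV: "R \<subseteq> V \<times> V" and bV: "b \<in> V" and cV: "c \<in> V" and bc: "b \<noteq> c"
    and irr: "\<forall>x. (x, x) \<notin> R" and nbc: "(b, c) \<notin> R" "(c, b) \<notin> R"
    and g: "g = (\<lambda>x. if x = c then b else x)"
  shows "cnt (g ` V) {(g x, g y) | x y. (x, y) \<in> R \<and> g x \<noteq> g y} N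
       = card {f. valid V R N f \<and> f b = f c}"
proof -
  let ?U = "{(g x, g y) | x y. (x, y) \<in> R \<and> g x \<noteq> g y}"
  have gV: "g ` V = V - {c}" using g bV cV bc by auto
  have gne: "g x \<noteq> g y" if "(x, y) \<in> R" for x y
    using that irr nbc g by (auto split: if_splits)
  define phi where "phi = (\<lambda>f x. if x \<in> V then f (g x) else (0::nat))"
  define psi where "psi = (\<lambda>f x. if x = c then 0 else (f x :: nat))"
  have "bij_betw phi {f. valid (g ` V) ?U N f} {f. valid V R N f \<and> f b = f c}"
  proof (rule bij_betw_byWitness[where f' = psi])
    show "\<forall>f\<in>{f. valid (g ` V) ?U N f}. psi (phi f) = f"
    proof
      fix f assume f: "f \<in> {f. valid (g ` V) ?U N f}"
      show "psi (phi f) = f"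
      proof
        fix x show "psi (phi f) x = f x"
          using f gV g unfolding psi_def phi_def valid_def by auto
      qed
    qed
    show "\<forall>f\<in>{f. valid V R N f \<and> f b = f c}. phi (psi f) = f"
    proof
      fix f assume f: "f \<in> {f. valid V R N f \<and> f b = f c}"
      show "phi (psi f) = f"
      proof
        fix x show "phi (psi f) x = f x"
          using f g bc unfolding psi_def phi_def valid_def by auto
      qed
    qed
    show "phi ` {f. valid (g ` V) ?U N f} \<subseteq> {f. valid V R N f \<and> f b = f c}"
    proof (rule subsetI)
      fix h assume "h \<in> phi ` {f. valid (g ` V) ?U N f}"
      then obtain f where v: "valid (g ` V) ?U N f" and h: "h = phi f" by blast
      have "valid V R N (phi f)"
        unfolding valid_def
      proof (intro conjI)
        show "\<forall>x\<in>V. phi f x < N" using v unfolding phi_def valid_def by auto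
        show "\<forall>x. x \<notin> V \<longrightarrow> phi f x = 0" unfolding phi_def by auto
        show "\<forall>(x, y)\<in>R. phi f x < phi f y"
        proof safe
          fix x y assume xy: "(x, y) \<in> R"
          then have "x \<in> V" "y \<in> V" using RV by auto
          moreover have "(g x, g y) \<in> ?U" using xy gne by blast
          then have "f (g x) < f (g y)" using v unfolding valid_def by auto
          ultimately show "phi f x < phi f y" unfolding phi_def by auto
        qed
      qed
      moreover have "phi f b = phi f c" using bV cV g bc unfolding phi_def by auto
      ultimately show "h \<in> {f. valid V R N f \<and> f b = f c}" using h by simp
    qed
    show "psi ` {f. valid V R N f \<and> f b = f c} \<subseteq> {f. valid (g ` V) ?U N f}"
    proof (rule subsetI)
      fix h assume "h \<in> psi ` {f. valid V R N f \<and> f b = f c}"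
      then obtain f where v: "valid V R N f" and fbc: "f b = f c" and h: "h = psi f" by blast
      have fg: "f (g x) = f x" for x using fbc g by auto
      have "valid (g ` V) ?U N (psi f)"
        unfolding valid_def
      proof (intro conjI)
        show "\<forall>x\<in>g ` V. psi f x < N" using v gV unfolding psi_def valid_def by auto
        show "\<forall>x. x \<notin> g ` V \<longrightarrow> psi f x = 0" using v gV unfolding psi_def valid_def by auto
        show "\<forall>(x, y)\<in>?U. psi f x < psi f y"
        proof safe
          fix x y assume xy: "(x, y) \<in> R" "g x \<noteq> g y"
          have "g x \<noteq> c" "g y \<noteq> c" using g bc by auto
          then have "psi f (g x) = f x" "psi f (g y) = f y" unfolding psi_def using fg by auto
          moreover have "f x < f y" using v xy unfolding valid_def by auto
          ultimately show "psi f (g x) < psi f (g y)" by simp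
        qed
      qed
      then show "h \<in> {f. valid (g ` V) ?U N f}" using h by simp
    qed
  qed
  then show ?thesis unfolding cnt_def by (rule bij_betw_same_card)
qed

lemma cnt_prod:
  assumes fA: "finite A" and fB: "finite B" and AB: "A \<inter> B = {}" and R: "R \<subseteq> A \<times> A \<union> B \<times> B"
  shows "cnt (A \<union> B) R N = cnt A (R \<inter> A \<times> A) N * cnt B (R \<inter> B \<times> B) N"
proof -
  define phi where "phi = (\<lambda>f::nat\<Rightarrow>nat. (\<lambda>x. if x \<in> A then f x else 0, \<lambda>x. if x \<in> B then f x else 0))"
  define psi where "psi = (\<lambda>(g::nat\<Rightarrow>nat, h::nat\<Rightarrow>nat) x. if x \<in> A then g x else h x)"
  have "bij_betw phi {f. valid (A \<union> B) R N f} ({f. valid A (R \<inter> A \<times> A) N f} \<times> {f. valid B (R \<inter> B \<times> B) N f})"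
  proof (rule bij_betw_byWitness[where f' = psi])
    show "\<forall>f\<in>{f. valid (A \<union> B) R N f}. psi (phi f) = f"
    proof
      fix f assume f: "f \<in> {f. valid (A \<union> B) R N f}"
      show "psi (phi f) = f"
      proof
        fix x show "psi (phi f) x = f x"
          using f unfolding psi_def phi_def valid_def by auto
      qed
    qed
    show "\<forall>p\<in>{f. valid A (R \<inter> A \<times> A) N f} \<times> {f. valid B (R \<inter> B \<times> B) N f}. phi (psi p) = p"
    proof
      fix p assume p: "p \<in> {f. valid A (R \<inter> A \<times> A) N f} \<times> {f. valid B (R \<inter> B \<times> B) N f}"
      obtain g h where gh: "p = (g, h)" by fastforce
      have "(\<lambda>x. if x \<in> A then psi p x else 0) = g"
        using p gh unfolding psi_def valid_def by auto
      moreover have "(\<lambda>x. if x \<in> B then psi p x else 0) = h"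
      proof
        fix x show "(if x \<in> B then psi p x else 0) = h x"
          using p gh AB unfolding psi_def valid_def by (cases "x \<in> B") auto
      qed
      ultimately show "phi (psi p) = p" using gh unfolding phi_def by simp
    qed
    show "phi ` {f. valid (A \<union> B) R N f} \<subseteq> {f. valid A (R \<inter> A \<times> A) N f} \<times> {f. valid B (R \<inter> B \<times> B) N f}"
      unfolding phi_def valid_def by auto
    show "psi ` ({f. valid A (R \<inter> A \<times> A) N f} \<times> {f. valid B (R \<inter> B \<times> B) N f}) \<subseteq> {f. valid (A \<union> B) R N f}"
    proof (rule subsetI)
      fix f assume "f \<in> psi ` ({f. valid A (R \<inter> A \<times> A) N f} \<times> {f. valid B (R \<inter> B \<times> B) N f})"
      then obtain g h where g: "valid A (R \<inter> A \<times> A) N g" and h: "valid B (R \<inter> B \<times> B) N h"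
        and f: "f = psi (g, h)" by blast
      have "valid (A \<union> B) R N (psi (g, h))"
        unfolding valid_def
      proof (intro conjI)
        show "\<forall>x\<in>A \<union> B. psi (g, h) x < N" using g h unfolding psi_def valid_def by auto
        show "\<forall>x. x \<notin> A \<union> B \<longrightarrow> psi (g, h) x = 0" using g h unfolding psi_def valid_def by auto
        show "\<forall>(x, y)\<in>R. psi (g, h) x < psi (g, h) y"
        proof safe
          fix x y assume xy: "(x, y) \<in> R"
          then have "(x, y) \<in> A \<times> A \<or> (x, y) \<in> B \<times> B" using R by auto
          then show "psi (g, h) x < psi (g, h) y"
          proof
            assume "(x, y) \<in> A \<times> A"
            then show ?thesis using g xy unfolding psi_def valid_def by auto
          next
            assume xyB: "(x, y) \<in> B \<times> B"
            then have "x \<notin> A" "y \<notin> A" using AB by auto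
            then show ?thesis using h xy xyB unfolding psi_def valid_def by auto
          qed
        qed
      qed
      then show "f \<in> {f. valid (A \<union> B) R N f}" using f by simp
    qed
  qed
  then have "card {f. valid (A \<union> B) R N f} = card ({f. valid A (R \<inter> A \<times> A) N f} \<times> {f. valid B (R \<inter> B \<times> B) N f})"
    by (rule bij_betw_same_card)
  then show ?thesis unfolding cnt_def by (simp add: card_cartesian_product)
qed

lemma cnt_single: "cnt {v} {} N = N"
proof -
  have "bij_betw (\<lambda>f. f v) {f. valid {v} {} N f} {..<N}"
  proof (rule bij_betw_byWitness[where f' = "\<lambda>i x. if x = v then i else 0"])
    show "\<forall>f\<in>{f. valid {v} {} N f}. (\<lambda>x. if x = v then f v else 0) = f"
      unfolding valid_def by auto
  qed (auto simp: valid_def)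
  then show ?thesis unfolding cnt_def by (simp add: bij_betw_same_card)
qed

lemma cnt_iso:
  assumes T: "oriented_tree T" and S: "oriented_tree S" and iso: "otree_iso T S"
  shows "cnt (fst T) (snd T) N = cnt (fst S) (snd S) N"
proof -
  obtain VT ET where Tp: "T = (VT, ET)" by fastforce
  obtain VS ES where Sp: "S = (VS, ES)" by fastforce
  from iso obtain p where bij: "bij_betw p VT VS"
    and pe: "\<forall>x\<in>VT. \<forall>y\<in>VT. (x, y) \<in> ET \<longleftrightarrow> (p x, p y) \<in> ES"
    unfolding otree_iso_def Tp Sp by auto
  have ET: "ET \<subseteq> VT \<times> VT" using T Tp unfolding oriented_tree_def Let_def by auto
  have ES: "ES \<subseteq> VS \<times> VS" using S Sp unfolding oriented_tree_def Let_def by auto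
  let ?q = "inv_into VT p"
  have qp: "?q (p x) = x" if "x \<in> VT" for x using bij that by (simp add: bij_betw_inv_into_left)
  have pq: "p (?q y) = y" if "y \<in> VS" for y using bij that by (simp add: bij_betw_inv_into_right)
  have qV: "?q y \<in> VT" if "y \<in> VS" for y using bij that by (metis bij_betw_def inv_into_into)
  have pV: "p x \<in> VS" if "x \<in> VT" for x using bij that by (auto simp: bij_betw_def)
  define phi where "phi = (\<lambda>f x. if x \<in> VT then f (p x) else (0::nat))"
  define psi where "psi = (\<lambda>f y. if y \<in> VS then f (?q y) else (0::nat))"
  have "bij_betw phi {f. valid VS ES N f} {f. valid VT ET N f}"
  proof (rule bij_betw_byWitness[where f' = psi])
    show "\<forall>f\<in>{f. valid VS ES N f}. psi (phi f) = f"
    proof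
      fix f assume f: "f \<in> {f. valid VS ES N f}"
      show "psi (phi f) = f"
      proof
        fix y show "psi (phi f) y = f y"
          using f pq qV unfolding psi_def phi_def valid_def by auto
      qed
    qed
    show "\<forall>f\<in>{f. valid VT ET N f}. phi (psi f) = f"
    proof
      fix f assume f: "f \<in> {f. valid VT ET N f}"
      show "phi (psi f) = f"
      proof
        fix x show "phi (psi f) x = f x"
          using f qp pV unfolding psi_def phi_def valid_def by auto
      qed
    qed
    show "phi ` {f. valid VS ES N f} \<subseteq> {f. valid VT ET N f}"
    proof (rule subsetI)
      fix h assume "h \<in> phi ` {f. valid VS ES N f}"
      then obtain f where v: "valid VS ES N f" and h: "h = phi f" by blast
      have "valid VT ET N (phi f)"
        unfolding valid_def
      proof (intro conjI)
        show "\<forall>x\<in>VT. phi f x < N" using v pV unfolding phi_def valid_def by auto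
        show "\<forall>x. x \<notin> VT \<longrightarrow> phi f x = 0" unfolding phi_def by auto
        show "\<forall>(x, y)\<in>ET. phi f x < phi f y"
        proof safe
          fix x y assume xy: "(x, y) \<in> ET"
          then have xV: "x \<in> VT" "y \<in> VT" using ET by auto
          then have "(p x, p y) \<in> ES" using pe xy by blast
          then show "phi f x < phi f y" using v xV unfolding phi_def valid_def by auto
        qed
      qed
      then show "h \<in> {f. valid VT ET N f}" using h by simp
    qed
    show "psi ` {f. valid VT ET N f} \<subseteq> {f. valid VS ES N f}"
    proof (rule subsetI)
      fix h assume "h \<in> psi ` {f. valid VT ET N f}"
      then obtain f where v: "valid VT ET N f" and h: "h = psi f" by blast
      have "valid VS ES N (psi f)"
        unfolding valid_def
      proof (intro conjI)
        show "\<forall>x\<in>VS. psi f x < N" using v qV unfolding psi_def valid_def by auto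
        show "\<forall>x. x \<notin> VS \<longrightarrow> psi f x = 0" unfolding psi_def by auto
        show "\<forall>(x, y)\<in>ES. psi f x < psi f y"
        proof safe
          fix x y assume xy: "(x, y) \<in> ES"
          then have xV: "x \<in> VS" "y \<in> VS" using ES by auto
          then have "(?q x, ?q y) \<in> ET" using pe xy qV pq by metis
          then show "psi f x < psi f y" using v xV unfolding psi_def valid_def by auto
        qed
      qed
      then show "h \<in> {f. valid VS ES N f}" using h by simp
    qed
  qed
  then show ?thesis unfolding cnt_def Tp Sp by (simp add: bij_betw_same_card)
qed



lemma tree_props:
  assumes "oriented_tree (V, E)"
  shows "finite V" "V \<noteq> {}" "E \<subseteq> V \<times> V" "\<forall>x. (x, x) \<notin> E" "\<forall>x y. (x, y) \<in> E \<longrightarrow> (y, x) \<notin> E"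
  using assms unfolding oriented_tree_def Let_def by auto

lemma cnt_zero: assumes "a \<in> V" shows "cnt V R 0 = 0"
proof -
  have "{f. valid V R 0 f} = {}" using assms unfolding valid_def by auto
  then show ?thesis unfolding cnt_def by (metis card.empty)
qed

lemma merge_sub: "{(g x, g y) | x y. (x, y) \<in> E \<and> g x \<noteq> g y} \<subseteq> g ` V \<times> g ` V" if "E \<subseteq> V \<times> V"
  using that by auto

lemma part_ii:
  assumes T: "oriented_tree (V, E)" and ab: "(a, b) \<in> E"
  shows "eta (V, E) + eta (reverse_edge (V, E) a b) + eta (contract_edge (V, E) a b) = 0"
proof -
  note tp = tree_props[OF T]
  have fin: "finite V" and EV: "E \<subseteq> V \<times> V" using tp by auto
  have aV: "a \<in> V" and bV: "b \<in> V" using ab EV by auto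
  have anb: "a \<noteq> b" using ab tp(4) by auto
  have ba: "(b, a) \<notin> E" using ab tp(5) by auto
  define F where "F = E - {(a, b)}"
  define E' where "E' = F \<union> {(b, a)}"
  define g where "g = (\<lambda>x. if x = b then a else x)"
  define EU where "EU = {(g x, g y) | x y. (x, y) \<in> E \<and> g x \<noteq> g y}"
  have rev: "reverse_edge (V, E) a b = (V, E')" unfolding reverse_edge_def E'_def F_def by simp
  have con: "contract_edge (V, E) a b = (g ` V, EU)"
    unfolding contract_edge_def merge_vertices_def EU_def g_def Let_def by simp
  have FV: "F \<subseteq> V \<times> V" "E' \<subseteq> V \<times> V" using EV aV bV unfolding F_def E'_def by auto
  have EUV: "EU \<subseteq> g ` V \<times> g ` V" unfolding EU_def using merge_sub[OF EV] by blast
  have EUF: "EU = {(g x, g y) | x y. (x, y) \<in> F \<and> g x \<noteq> g y}"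
    unfolding EU_def F_def g_def by auto
  have count: "cnt V E N + cnt V E' N + cnt (g ` V) EU N = cnt V F N" for N
  proof -
    have vE: "valid V E N f \<longleftrightarrow> valid V F N f \<and> f a < f b" for f
    proof -
      have "E = insert (a, b) F" using ab unfolding F_def by auto
      then show ?thesis unfolding valid_def by auto
    qed
    have vE': "valid V E' N f \<longleftrightarrow> valid V F N f \<and> f b < f a" for f
      unfolding E'_def valid_def by auto
    have m: "cnt (g ` V) EU N = card {f. valid V F N f \<and> f a = f b}"
      unfolding EUF
      by (rule cnt_merge[OF fin FV(1) aV bV anb]) (use tp ba g_def in \<open>auto simp: F_def\<close>)
    have fF: "finite {f. valid V F N f}" by (rule finite_valid[OF fin])
    have "{f. valid V F N f} = ({f. valid V E N f} \<union> {f. valid V E' N f}) \<union> {f. valid V F N f \<and> f a = f b}"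
      using vE vE' by auto
    then have "cnt V F N = card (({f. valid V E N f} \<union> {f. valid V E' N f}) \<union> {f. valid V F N f \<and> f a = f b})"
      unfolding cnt_def by simp
    also have "\<dots> = card ({f. valid V E N f} \<union> {f. valid V E' N f}) + card {f. valid V F N f \<and> f a = f b}"
      by (rule card_Un_disjoint) (use fF vE vE' in \<open>auto intro: finite_subset\<close>)
    also have "card ({f. valid V E N f} \<union> {f. valid V E' N f}) = cnt V E N + cnt V E' N"
      unfolding cnt_def
      by (rule card_Un_disjoint) (use fF vE vE' in \<open>auto intro: finite_subset\<close>)
    finally show ?thesis using m by simp
  qed
  have finU: "finite (g ` V)" using fin by simp
  have Qsum: "Qp V E + Qp V E' + Qp (g ` V) EU = Qp V F"
    by (rule poly_eq_nat) (simp add: poly_Qp[OF fin EV] poly_Qp[OF fin FV(1)] poly_Qp[OF fin FV(2)]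
        poly_Qp[OF finU EUV] flip: count)
  define A where "A = {z \<in> V. (a, z) \<in> (F \<union> F\<inverse>)\<^sup>*}"
  define B where "B = V - A"
  have aA: "a \<in> A" unfolding A_def using aV by auto
  have bB: "b \<in> B" unfolding B_def A_def using tree_cut[OF T ab] bV unfolding F_def by auto
  have AB: "A \<inter> B = {}" "V = A \<union> B" unfolding B_def A_def by auto
  have finA: "finite A" "finite B" using fin unfolding A_def B_def by auto
  have Fsplit: "F \<subseteq> A \<times> A \<union> B \<times> B"
  proof
    fix p assume p: "p \<in> F"
    obtain x y where xy: "p = (x, y)" by fastforce
    have xyV: "x \<in> V" "y \<in> V" using p xy FV by auto
    have "x \<in> A \<longleftrightarrow> y \<in> A"
    proof
      assume "x \<in> A"
      then have "(a, x) \<in> (F \<union> F\<inverse>)\<^sup>*" unfolding A_def by auto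
      then have "(a, y) \<in> (F \<union> F\<inverse>)\<^sup>*" using p xy by (meson UnI1 rtrancl.rtrancl_into_rtrancl)
      then show "y \<in> A" unfolding A_def using xyV by auto
    next
      assume "y \<in> A"
      then have "(a, y) \<in> (F \<union> F\<inverse>)\<^sup>*" unfolding A_def by auto
      then have "(a, x) \<in> (F \<union> F\<inverse>)\<^sup>*" using p xy by (meson UnI2 converseI rtrancl.rtrancl_into_rtrancl)
      then show "x \<in> A" unfolding A_def using xyV by auto
    qed
    then show "p \<in> A \<times> A \<union> B \<times> B" using xy xyV unfolding B_def by auto
  qed
  have FA: "F \<inter> A \<times> A \<subseteq> A \<times> A" "F \<inter> B \<times> B \<subseteq> B \<times> B" by auto
  have Qprod: "Qp V F = Qp A (F \<inter> A \<times> A) * Qp B (F \<inter> B \<times> B)"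
  proof (rule poly_eq_nat)
    fix N
    have "cnt V F N = cnt A (F \<inter> A \<times> A) N * cnt B (F \<inter> B \<times> B) N"
      unfolding AB(2) by (rule cnt_prod[OF finA AB(1) Fsplit])
    then show "poly (Qp V F) (of_nat N) = poly (Qp A (F \<inter> A \<times> A) * Qp B (F \<inter> B \<times> B)) (of_nat N)"
      by (simp add: poly_Qp[OF fin FV(1)] poly_Qp[OF finA(1) FA(1)] poly_Qp[OF finA(2) FA(2)])
  qed
  have QA0: "poly (Qp A (F \<inter> A \<times> A)) 0 = 0"
    using poly_Qp[OF finA(1) FA(1), of 0] cnt_zero[OF aA] by simp
  have QB0: "poly (Qp B (F \<inter> B \<times> B)) 0 = 0"
    using poly_Qp[OF finA(2) FA(2), of 0] cnt_zero[OF bB] by simp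
  have "poly (pderiv (Qp V F)) 0 = 0"
    unfolding Qprod by (simp add: pderiv_mult QA0 QB0)
  then show ?thesis unfolding rev con eta_def using Qsum[symmetric]
    by (simp add: pderiv_add)
qed



lemma part_iii:
  assumes T: "oriented_tree (V, E)" and ab: "(a, b) \<in> E" and ac: "(a, c) \<in> E" and bc: "b \<noteq> c"
  shows "eta (V, E) = eta (replace_edge (V, E) (a, c) (b, c)) + eta (replace_edge (V, E) (a, b) (c, b))
               + eta (merge_vertices (V, E) b c)"
proof -
  note tp = tree_props[OF T]
  have fin: "finite V" and EV: "E \<subseteq> V \<times> V" using tp by auto
  have aV: "a \<in> V" and bV: "b \<in> V" and cV: "c \<in> V" using ab ac EV by auto
  have anb: "a \<noteq> b" "a \<noteq> c" using ab ac tp(4) by auto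
  have nbc: "(b, c) \<notin> E"
  proof
    assume bcE: "(b, c) \<in> E"
    let ?F = "E - {(b, c)}"
    have "(b, a) \<in> ?F \<union> ?F\<inverse>" "(a, c) \<in> ?F \<union> ?F\<inverse>" using ab ac anb by auto
    then have "(b, c) \<in> (?F \<union> ?F\<inverse>)\<^sup>*" by (meson r_into_rtrancl rtrancl_trans)
    with tree_cut[OF T bcE] show False by simp
  qed
  have ncb: "(c, b) \<notin> E"
  proof
    assume cbE: "(c, b) \<in> E"
    let ?F = "E - {(c, b)}"
    have "(c, a) \<in> ?F \<union> ?F\<inverse>" "(a, b) \<in> ?F \<union> ?F\<inverse>" using ab ac anb by auto
    then have "(c, b) \<in> (?F \<union> ?F\<inverse>)\<^sup>*" by (meson r_into_rtrancl rtrancl_trans)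
    with tree_cut[OF T cbE] show False by simp
  qed
  define E1 where "E1 = (E - {(a, c)}) \<union> {(b, c)}"
  define E2 where "E2 = (E - {(a, b)}) \<union> {(c, b)}"
  define g where "g = (\<lambda>x. if x = c then b else x)"
  define EU where "EU = {(g x, g y) | x y. (x, y) \<in> E \<and> g x \<noteq> g y}"
  have r1: "replace_edge (V, E) (a, c) (b, c) = (V, E1)" unfolding replace_edge_def E1_def by simp
  have r2: "replace_edge (V, E) (a, b) (c, b) = (V, E2)" unfolding replace_edge_def E2_def by simp
  have mg: "merge_vertices (V, E) b c = (g ` V, EU)"
    unfolding merge_vertices_def EU_def g_def Let_def by simp
  have EiV: "E1 \<subseteq> V \<times> V" "E2 \<subseteq> V \<times> V" using EV bV cV unfolding E1_def E2_def by auto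
  have EUV: "EU \<subseteq> g ` V \<times> g ` V" unfolding EU_def using merge_sub[OF EV] by blast
  have count: "cnt V E N = cnt V E1 N + cnt V E2 N + cnt (g ` V) EU N" for N
  proof -
    have v1: "valid V E1 N f \<longleftrightarrow> valid V E N f \<and> f b < f c" for f
    proof
      assume v: "valid V E1 N f"
      have "(a, b) \<in> E1" "(b, c) \<in> E1" using ab bc unfolding E1_def by auto
      then have "f a < f b" "f b < f c" using v unfolding valid_def by auto
      then show "valid V E N f \<and> f b < f c" using v unfolding valid_def E1_def by auto
    qed (auto simp: valid_def E1_def)
    have v2: "valid V E2 N f \<longleftrightarrow> valid V E N f \<and> f c < f b" for f
    proof
      assume v: "valid V E2 N f"
      have "(a, c) \<in> E2" "(c, b) \<in> E2" using ac bc unfolding E2_def by auto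
      then have "f a < f c" "f c < f b" using v unfolding valid_def by auto
      then show "valid V E N f \<and> f c < f b" using v unfolding valid_def E2_def by auto
    qed (auto simp: valid_def E2_def)
    have m: "cnt (g ` V) EU N = card {f. valid V E N f \<and> f b = f c}"
      unfolding EU_def
      by (rule cnt_merge[OF fin EV bV cV bc]) (use tp nbc ncb g_def in auto)
    have fF: "finite {f. valid V E N f}" by (rule finite_valid[OF fin])
    have "{f. valid V E N f} = ({f. valid V E1 N f} \<union> {f. valid V E2 N f}) \<union> {f. valid V E N f \<and> f b = f c}"
      using v1 v2 by auto
    then have "cnt V E N = card (({f. valid V E1 N f} \<union> {f. valid V E2 N f}) \<union> {f. valid V E N f \<and> f b = f c})"
      unfolding cnt_def by simp
    also have "\<dots> = card ({f. valid V E1 N f} \<union> {f. valid V E2 N f}) + card {f. valid V E N f \<and> f b = f c}"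
      by (rule card_Un_disjoint) (use fF v1 v2 in \<open>auto intro: finite_subset\<close>)
    also have "card ({f. valid V E1 N f} \<union> {f. valid V E2 N f}) = cnt V E1 N + cnt V E2 N"
      unfolding cnt_def
      by (rule card_Un_disjoint) (use fF v1 v2 in \<open>auto intro: finite_subset\<close>)
    finally show ?thesis using m by simp
  qed
  have finU: "finite (g ` V)" using fin by simp
  have Qsum: "Qp V E = Qp V E1 + Qp V E2 + Qp (g ` V) EU"
    by (rule poly_eq_nat) (simp add: poly_Qp[OF fin EV] poly_Qp[OF fin EiV(1)] poly_Qp[OF fin EiV(2)]
        poly_Qp[OF finU EUV] count)
  then show ?thesis unfolding r1 r2 mg eta_def by (simp add: pderiv_add)
qed

theorem lemma11p1:
  shows "\<exists>\<eta> :: otree \<Rightarrow> rat.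
    (\<forall>T S. oriented_tree T \<and> oriented_tree S \<and> otree_iso T S \<longrightarrow> \<eta> T = \<eta> S) \<and>
    (\<forall>v. \<eta> ({v}, {}) = 1) \<and>
    (\<forall>T a b. oriented_tree T \<and> (a, b) \<in> snd T \<longrightarrow>
        \<eta> T + \<eta> (reverse_edge T a b) + \<eta> (contract_edge T a b) = 0) \<and>
    (\<forall>T a b c. oriented_tree T \<and> (a, b) \<in> snd T \<and> (a, c) \<in> snd T \<and> b \<noteq> c \<longrightarrow>
        \<eta> T = \<eta> (replace_edge T (a, c) (b, c)) + \<eta> (replace_edge T (a, b) (c, b))
               + \<eta> (merge_vertices T b c))"
proof (intro exI[of _ eta] conjI allI impI)
  fix T S assume h: "oriented_tree T \<and> oriented_tree S \<and> otree_iso T S"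
  obtain VT ET where Tp: "T = (VT, ET)" by fastforce
  obtain VS ES where Sp: "S = (VS, ES)" by fastforce
  have t1: "finite VT" "ET \<subseteq> VT \<times> VT" using tree_props h Tp by auto
  have t2: "finite VS" "ES \<subseteq> VS \<times> VS" using tree_props h Sp by auto
  have "Qp VT ET = Qp VS ES"
    by (rule poly_eq_nat) (use cnt_iso[of T S] h Tp Sp in \<open>simp add: poly_Qp[OF t1] poly_Qp[OF t2]\<close>)
  then show "eta T = eta S" unfolding eta_def Tp Sp by simp
next
  fix v :: nat
  have "Qp {v} {} = [:0, 1:]"
    by (rule poly_eq_nat) (simp add: poly_Qp cnt_single)
  then show "eta ({v}, {}) = 1" unfolding eta_def by (simp add: pderiv_pCons)
next
  fix T a b assume h: "oriented_tree T \<and> (a, b) \<in> snd T"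
  obtain V E where Tp: "T = (V, E)" by fastforce
  show "eta T + eta (reverse_edge T a b) + eta (contract_edge T a b) = 0"
    using part_ii[of V E a b] h Tp by simp
next
  fix T a b c assume h: "oriented_tree T \<and> (a, b) \<in> snd T \<and> (a, c) \<in> snd T \<and> b \<noteq> c"
  obtain V E where Tp: "T = (V, E)" by fastforce
  show "eta T = eta (replace_edge T (a, c) (b, c)) + eta (replace_edge T (a, b) (c, b))
               + eta (merge_vertices T b c)"
    using part_iii[of V E a b c] h Tp by simp
qed

end
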